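(* Let $T,L$ be positive integers and $\epsilon\in(0,1)$. For $\rho=\{\rho_t^l\}\in[0,1]^{T\times L}$ let $F(\rho)=\sum_{t,l}\rho_t^l r_t^l b_t^l(\rho_t^l)$, $G(\rho)=1-\prod_{t=1}^T\prod_{l=1}^L\rho_t^l$, $H(\rho)=\sum_{t,l}(1-\rho_t^l)$. Let $\rho^\ast$ be an optimal solution of PA1: $\min F(\rho)$ s.t. $G(\rho)\le\epsilon$, $\rho\in[0,1]^{T\times L}$. Let $\tilde\lambda,\tilde\rho$ be optimal solutions of $\max_{\lambda\ge0}\min_{\rho\in[0,1]^{T\times L}}\{F(\rho)+\lambda[H(\rho)-\epsilon]\}$. Then $$0\le F(\tilde\rho)-F(\rho^\ast)\le\tilde\lambda\,\frac{TL(TL-1)}{2}\epsilon^2.$$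
   Context: For each $t\in\{1,\dots,T\}$, $l\in\{1,\dots,L\}$: $r_t^l$ is a positive integer and $b_t^l:[0,1]\to[0,b^l_{\max}]$ is strictly increasing and convex. $\rho_t^l$ is the probability of the event of successfully recruiting $r_t^l$ participants at time $t$, location $l$, and these events are independent. PA2 denotes the problem $\min F(\rho)$ s.t. $H(\rho)\le\epsilon$, $\rho\in[0,1]^{T\times L}$, so $F(\tilde\rho)$ is the optimal value of PA2 and $F(\rho^\ast)$ that of PA1. *)

theory Defs
  imports "HOL-Analysis.Analysis"
begin

text \<open>Decision variables rho t l for t in {1..T}, l in {1..L}, represented as functions
  nat => nat => real; only the values on the index box matter.\<close>

definition Box :: "nat \<Rightarrow> nat \<Rightarrow> (nat \<Rightarrow> nat \<Rightarrow> real) set" where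
  "Box T L = {\<rho>. \<forall>t\<in>{1..T}. \<forall>l\<in>{1..L}. 0 \<le> \<rho> t l \<and> \<rho> t l \<le> 1}"

definition Fobj :: "nat \<Rightarrow> nat \<Rightarrow> (nat \<Rightarrow> nat \<Rightarrow> nat) \<Rightarrow> (nat \<Rightarrow> nat \<Rightarrow> real \<Rightarrow> real)
    \<Rightarrow> (nat \<Rightarrow> nat \<Rightarrow> real) \<Rightarrow> real" where
  "Fobj T L r b \<rho> = (\<Sum>t\<in>{1..T}. \<Sum>l\<in>{1..L}. \<rho> t l * real (r t l) * b t l (\<rho> t l))"

definition Gcon :: "nat \<Rightarrow> nat \<Rightarrow> (nat \<Rightarrow> nat \<Rightarrow> real) \<Rightarrow> real" where
  "Gcon T L \<rho> = 1 - (\<Prod>t\<in>{1..T}. \<Prod>l\<in>{1..L}. \<rho> t l)"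

definition Hcon :: "nat \<Rightarrow> nat \<Rightarrow> (nat \<Rightarrow> nat \<Rightarrow> real) \<Rightarrow> real" where
  "Hcon T L \<rho> = (\<Sum>t\<in>{1..T}. \<Sum>l\<in>{1..L}. 1 - \<rho> t l)"

definition Lag :: "nat \<Rightarrow> nat \<Rightarrow> (nat \<Rightarrow> nat \<Rightarrow> nat) \<Rightarrow> (nat \<Rightarrow> nat \<Rightarrow> real \<Rightarrow> real) \<Rightarrow> real
    \<Rightarrow> (nat \<Rightarrow> nat \<Rightarrow> real) \<Rightarrow> real \<Rightarrow> real" where
  "Lag T L r b eps \<rho> lam = Fobj T L r b \<rho> + lam * (Hcon T L \<rho> - eps)"

definition dualfun :: "nat \<Rightarrow> nat \<Rightarrow> (nat \<Rightarrow> nat \<Rightarrow> nat) \<Rightarrow> (nat \<Rightarrow> nat \<Rightarrow> real \<Rightarrow> real) \<Rightarrow> real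
    \<Rightarrow> real \<Rightarrow> real" where
  "dualfun T L r b eps lam = (INF \<rho>\<in>Box T L. Lag T L r b eps \<rho> lam)"

end

theory Submission
  imports Defs
begin

lemma strict_conv_xb:
  fixes b :: "real \<Rightarrow> real" and r :: real
  assumes r: "r > 0" and mono: "strict_mono_on {0..1} b" and cv: "convex_on {0..1} b"
    and a: "a \<in> {0..1}" and c: "c \<in> {0..1}" and ac: "a \<noteq> c" and t: "t \<in> {0<..<1}"
  shows "((1-t)*a+t*c) * r * b ((1-t)*a+t*c) < (1-t)*(a*r*b a) + t*(c*r*b c)"
proof -
  define m where "m = (1-t)*a+t*c"
  have t0: "0 < t" "t < 1" using t by auto
  have m0: "m \<ge> 0" unfolding m_def using a c t0 by (auto intro!: add_nonneg_nonneg mult_nonneg_nonneg)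
  have bm: "b m \<le> (1-t)*b a + t*b c"
    using convex_onD[OF cv, of t a c] a c t0 by (simp add: m_def)
  have "m * b m \<le> m * ((1-t)*b a + t*b c)" using mult_left_mono[OF bm m0] .
  moreover have "(a - c) * (b a - b c) > 0"
  proof (cases "a < c")
    case True
    then have "b a < b c" using mono a c by (auto simp: strict_mono_on_def)
    with True show ?thesis by (simp add: mult_neg_neg)
  next
    case False
    then have "c < a" using ac by auto
    then have "b c < b a" using mono a c by (auto simp: strict_mono_on_def)
    with \<open>c < a\<close> show ?thesis by simp
  qed
  moreover have "(1-t)*(a*b a) + t*(c*b c) - m * ((1-t)*b a + t*b c) = t*(1-t)*((a - c) * (b a - b c))"
    unfolding m_def by (simp add: algebra_simps)
  moreover have "t*(1-t) > 0" using t0 by simp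
  ultimately have "m * b m < (1-t)*(a*b a) + t*(c*b c)"
    by (smt (verit) mult_pos_pos)
  then have "r * (m * b m) < r * ((1-t)*(a*b a) + t*(c*b c))" using r by simp
  then show ?thesis unfolding m_def[symmetric] by (simp add: algebra_simps)
qed

lemma one_dim:
  fixes \<phi> :: "real \<Rightarrow> real"
  assumes conv: "\<forall>a\<in>{0..1}. \<forall>c\<in>{0..1}. \<forall>t\<in>{0<..<1}. a \<noteq> c \<longrightarrow> \<phi> ((1-t)*a+t*c) < (1-t)*\<phi> a + t*\<phi> c"
    and x0: "x0 \<in> {0..1}" and mn: "\<forall>x\<in>{0..1}. \<phi> x0 \<le> \<phi> x" and h: "h > 0"
  shows "\<exists>D>0. \<forall>d. 0 < d \<and> d \<le> D \<longrightarrow> (\<forall>x\<in>{0..1}. \<phi> x - \<phi> x0 \<ge> d*(x-x0) - d*h)"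
proof (cases "x0 + h \<le> 1")
  case False
  show ?thesis
  proof (intro exI[of _ 1] conjI allI impI ballI)
    fix d x :: real assume d: "0 < d \<and> d \<le> 1" and x: "x \<in> {0..(1::real)}"
    have "x - x0 \<le> h" using x False by auto
    then have "d*(x-x0) \<le> d*h" using d by (simp add: mult_left_mono)
    then show "\<phi> x - \<phi> x0 \<ge> d*(x-x0) - d*h" using mn x by force
  qed simp
next
  case True
  define c where "c = \<phi> (x0+h) - \<phi> x0"
  have x0h: "x0 + h \<in> {0..1}" using True x0 h by auto
  have "\<phi> ((1-1/2)*x0 + (1/2)*(x0+h)) < (1-1/2)*\<phi> x0 + (1/2)*\<phi> (x0+h)"
  proof -
    have "(1/2::real) \<in> {0<..<1}" by simp
    moreover have "x0 \<noteq> x0 + h" using h by simp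
    ultimately show ?thesis using conv x0 x0h by blast
  qed
  moreover have "(1-1/2)*x0 + (1/2)*(x0+h) = x0 + h/2" by (simp add: field_simps)
  then have "(1-1/2)*x0 + (1/2)*(x0+h) \<in> {0..1}" using x0 x0h h by auto
  ultimately have cpos: "c > 0" using mn unfolding c_def by force
  show ?thesis
  proof (intro exI[of _ "c/h"] conjI allI impI ballI)
    show "c/h > 0" using cpos h by simp
    fix d x :: real assume d: "0 < d \<and> d \<le> c/h" and x: "x \<in> {0..(1::real)}"
    show "\<phi> x - \<phi> x0 \<ge> d*(x-x0) - d*h"
    proof (cases "x \<le> x0 + h")
      case True
      then have "d*(x-x0) \<le> d*h" using d by (simp add: mult_left_mono)
      then show ?thesis using mn x by force
    next
      case False
      define t where "t = h/(x-x0)"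
      have xx: "x - x0 > h" using False by simp
      have t01: "t \<in> {0<..<1}" unfolding t_def using xx h by auto
      have th: "t*(x-x0) = h" unfolding t_def using xx h by simp
      have "(1-t)*x0 + t*x = x0 + t*(x-x0)" by (simp add: algebra_simps)
      then have eq: "(1-t)*x0 + t*x = x0 + h" using th by simp
      have "\<phi> ((1-t)*x0 + t*x) < (1-t)*\<phi> x0 + t*\<phi> x"
        using conv x0 x t01 xx h by auto
      then have "c < t*(\<phi> x - \<phi> x0)" unfolding c_def eq by (simp add: algebra_simps)
      then have "c*(x-x0) < h*(\<phi> x - \<phi> x0)" unfolding t_def using xx h by (simp add: field_simps)
      moreover have "d*h \<le> c" using d h by (simp add: field_simps)
      then have "d*h*(x-x0) \<le> c*(x-x0)" using xx h by (simp add: mult_right_mono)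
      ultimately have "h*(d*(x-x0)) < h*(\<phi> x - \<phi> x0)" by (simp add: algebra_simps)
      then have "d*(x-x0) < \<phi> x - \<phi> x0" using h by simp
      moreover have "d*h > 0" using d h by simp
      ultimately show ?thesis by linarith
    qed
  qed
qed

lemma one_dim':
  fixes \<phi> :: "real \<Rightarrow> real"
  assumes conv: "\<forall>a\<in>{0..1}. \<forall>c\<in>{0..1}. \<forall>t\<in>{0<..<1}. a \<noteq> c \<longrightarrow> \<phi> ((1-t)*a+t*c) < (1-t)*\<phi> a + t*\<phi> c"
    and x0: "x0 \<in> {0..1}" and mn: "\<forall>x\<in>{0..1}. \<phi> x0 \<le> \<phi> x" and h: "h > 0"
  shows "\<exists>D>0. \<forall>d. 0 < d \<and> d \<le> D \<longrightarrow> (\<forall>x\<in>{0..1}. \<phi> x - \<phi> x0 \<ge> d*(x0-x) - d*h)"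
proof -
  define \<psi> where "\<psi> y = \<phi> (1 - y)" for y
  have conv': "\<forall>a\<in>{0..1}. \<forall>c\<in>{0..1}. \<forall>t\<in>{0<..<1}. a \<noteq> c \<longrightarrow> \<psi> ((1-t)*a+t*c) < (1-t)*\<psi> a + t*\<psi> c"
  proof (intro ballI impI)
    fix a c t :: real assume a: "a \<in> {0..1}" and c: "c \<in> {0..1}" and t: "t \<in> {0<..<1}" and ac: "a \<noteq> c"
    have "\<phi> ((1-t)*(1-a)+t*(1-c)) < (1-t)*\<phi> (1-a) + t*\<phi> (1-c)"
      using conv a c t ac by auto
    moreover have "1 - ((1-t)*a+t*c) = (1-t)*(1-a)+t*(1-c)" by (simp add: algebra_simps)
    ultimately show "\<psi> ((1-t)*a+t*c) < (1-t)*\<psi> a + t*\<psi> c" unfolding \<psi>_def by simp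
  qed
  have mn': "\<forall>x\<in>{0..1}. \<psi> (1-x0) \<le> \<psi> x" unfolding \<psi>_def using mn by auto
  obtain D where D: "D > 0" "\<forall>d. 0 < d \<and> d \<le> D \<longrightarrow> (\<forall>x\<in>{0..1}. \<psi> x - \<psi> (1-x0) \<ge> d*(x-(1-x0)) - d*h)"
    using one_dim[OF conv' _ mn' h] x0 by auto
  show ?thesis
  proof (intro exI[of _ D] conjI allI impI ballI)
    fix d x :: real assume d: "0 < d \<and> d \<le> D" and x: "x \<in> {0..(1::real)}"
    have "1 - x \<in> {0..1}" using x by auto
    then have "\<psi> (1-x) - \<psi> (1-x0) \<ge> d*((1-x)-(1-x0)) - d*h" using D(2) d by blast
    then show "\<phi> x - \<phi> x0 \<ge> d*(x0-x) - d*h" unfolding \<psi>_def by simp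
  qed (use D in auto)
qed

lemma bonf:
  fixes q :: "'a \<Rightarrow> real"
  assumes "finite S" "\<forall>i\<in>S. 0 \<le> q i \<and> q i \<le> M \<and> q i \<le> 1"
  shows "1 - (\<Prod>i\<in>S. 1 - q i) \<le> (\<Sum>i\<in>S. q i) \<and>
         (\<Sum>i\<in>S. q i) \<le> (1 - (\<Prod>i\<in>S. 1 - q i)) + real (card S) * (real (card S) - 1) / 2 * M\<^sup>2"
  using assms
proof (induction S rule: finite_induct)
  case empty then show ?case by simp
next
  case (insert a F)
  define P where "P = (\<Prod>i\<in>F. 1 - q i)"
  define k where "k = real (card F)"
  have IH: "1 - P \<le> (\<Sum>i\<in>F. q i)" "(\<Sum>i\<in>F. q i) \<le> (1 - P) + k*(k-1)/2*M\<^sup>2"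
    using insert unfolding P_def k_def by auto
  have P01: "0 \<le> P" "P \<le> 1" unfolding P_def using insert.prems
    by (auto intro!: prod_nonneg prod_le_1)
  have qa: "0 \<le> q a" "q a \<le> M" "q a \<le> 1" using insert.prems by auto
  have sF: "(\<Sum>i\<in>F. q i) \<le> k * M"
    using sum_bounded_above[of F q M] insert.prems unfolding k_def by auto
  have prod: "(\<Prod>i\<in>insert a F. 1 - q i) = (1 - q a) * P" using insert unfolding P_def by simp
  have sum: "(\<Sum>i\<in>insert a F. q i) = q a + (\<Sum>i\<in>F. q i)" using insert by simp
  have card: "real (card (insert a F)) = k + 1" using insert unfolding k_def by simp
  have Q0: "0 \<le> 1 - P" using P01 by simp
  have "q a * (1 - P) \<le> M * (1 - P)" using qa Q0 by (simp add: mult_right_mono)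
  also have "\<dots> \<le> M * (k*M)" using IH sF qa by (intro mult_left_mono) auto
  finally have key: "q a * (1 - P) \<le> k * M\<^sup>2" by (simp add: power2_eq_square algebra_simps)
  have kk: "(k+1)*(k+1-1)/2 = k*(k-1)/2 + k" by (simp add: field_simps)
  show ?case unfolding prod sum card
  proof
    show "1 - (1 - q a) * P \<le> q a + (\<Sum>i\<in>F. q i)"
    proof -
      have "q a * P \<le> q a" using qa P01 by (simp add: mult_left_le)
      moreover have "1 - (1-q a)*P = (1-P) + q a * P" by (simp add: algebra_simps)
      ultimately show ?thesis using IH(1) by linarith
    qed
    have "q a + (\<Sum>i\<in>F. q i) \<le> q a + (1 - P) + k*(k-1)/2*M\<^sup>2" using IH(2) by simp
    also have "\<dots> \<le> 1 - (1 - q a) * P + (k*(k-1)/2 + k)*M\<^sup>2"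
      using key by (simp add: algebra_simps)
    finally have X: "q a + (\<Sum>i\<in>F. q i) \<le> 1 - (1 - q a) * P + (k*(k-1)/2 + k)*M\<^sup>2" .
    show "q a + (\<Sum>i\<in>F. q i) \<le> 1 - (1 - q a) * P + (k + 1) * (k + 1 - 1) / 2 * M\<^sup>2"
      unfolding kk by (rule X)
  qed
qed

lemma F_eq: "Fobj T L r b \<rho> = (\<Sum>p\<in>{1..T}\<times>{1..L}. \<rho> (fst p) (snd p) * real (r (fst p) (snd p)) * b (fst p) (snd p) (\<rho> (fst p) (snd p)))"
  unfolding Fobj_def sum.cartesian_product by (simp add: split_def)

lemma Hsum_eq: "Hcon T L \<rho> = real (card ({1..T}\<times>{1..L})) - (\<Sum>p\<in>{1..T}\<times>{1..L}. \<rho> (fst p) (snd p))"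
proof -
  have "Hcon T L \<rho> = (\<Sum>p\<in>{1..T}\<times>{1..L}. 1 - \<rho> (fst p) (snd p))"
    unfolding Hcon_def sum.cartesian_product by (simp add: split_def)
  also have "\<dots> = real (card ({1..T}\<times>{1..L})) - (\<Sum>p\<in>{1..T}\<times>{1..L}. \<rho> (fst p) (snd p))"
    by (simp add: sum_subtractf)
  finally show ?thesis .
qed

lemma G_eq: "Gcon T L \<rho> = 1 - (\<Prod>p\<in>{1..T}\<times>{1..L}. \<rho> (fst p) (snd p))"
  unfolding Gcon_def prod.cartesian_product by (simp add: split_def)

lemma Lag_eq: "Lag T L r b eps \<rho> lam =
   (\<Sum>p\<in>{1..T}\<times>{1..L}. \<rho> (fst p) (snd p) * real (r (fst p) (snd p)) * b (fst p) (snd p) (\<rho> (fst p) (snd p)) - lam * \<rho> (fst p) (snd p))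
   + lam * (real (card ({1..T}\<times>{1..L})) - eps)"
  unfolding Lag_def F_eq Hsum_eq by (simp add: sum_subtractf sum_distrib_left algebra_simps)

lemma Box_iff: "\<rho> \<in> Box T L \<longleftrightarrow> (\<forall>p\<in>{1..T}\<times>{1..L}. \<rho> (fst p) (snd p) \<in> {0..1})"
  unfolding Box_def by auto

theorem theorem1:
  fixes T L :: nat and eps :: real
    and r :: "nat \<Rightarrow> nat \<Rightarrow> nat" and b :: "nat \<Rightarrow> nat \<Rightarrow> real \<Rightarrow> real"
    and bmax :: "nat \<Rightarrow> real"
    and \<rho>star \<rho>t :: "nat \<Rightarrow> nat \<Rightarrow> real" and lamt :: real
  assumes T: "T \<ge> 1" and L: "L \<ge> 1"
    and eps_pos: "0 < eps" "eps < 1"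
    and r_pos: "\<forall>t\<in>{1..T}. \<forall>l\<in>{1..L}. r t l > 0"
    and b_range: "\<forall>t\<in>{1..T}. \<forall>l\<in>{1..L}. \<forall>x\<in>{0..1}. 0 \<le> b t l x \<and> b t l x \<le> bmax l"
    and b_mono: "\<forall>t\<in>{1..T}. \<forall>l\<in>{1..L}. strict_mono_on {0..1} (b t l)"
    and b_convex: "\<forall>t\<in>{1..T}. \<forall>l\<in>{1..L}. convex_on {0..1} (b t l)"
    and PA1_feas: "\<rho>star \<in> Box T L" "Gcon T L \<rho>star \<le> eps"
    and PA1_opt: "\<forall>\<rho>\<in>Box T L. Gcon T L \<rho> \<le> eps \<longrightarrow> Fobj T L r b \<rho>star \<le> Fobj T L r b \<rho>"
    and lam_nonneg: "lamt \<ge> 0"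
    and rho_t_box: "\<rho>t \<in> Box T L"
    and rho_t_min: "\<forall>\<rho>\<in>Box T L. Lag T L r b eps \<rho>t lamt \<le> Lag T L r b eps \<rho> lamt"
    and lam_max: "\<forall>lam\<ge>0. dualfun T L r b eps lam \<le> dualfun T L r b eps lamt"
  shows "0 \<le> Fobj T L r b \<rho>t - Fobj T L r b \<rho>star
       \<and> Fobj T L r b \<rho>t - Fobj T L r b \<rho>star
           \<le> lamt * (real (T * L) * (real (T * L) - 1) / 2) * eps\<^sup>2"
proof -
  define I where "I = {1..T}\<times>{1..L}"
  have finI: "finite I" unfolding I_def by simp
  have cardI: "card I = T * L" unfolding I_def by simp
  define n where "n = real (card I)"
  have npos: "n > 0" unfolding n_def cardI using T L by simp
  have Inz: "I \<noteq> {}" using npos unfolding n_def by auto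
  define phi where "phi p lam x = x * real (r (fst p) (snd p)) * b (fst p) (snd p) x - lam * x" for p lam x
  have LagE: "Lag T L r b eps \<rho> lam = (\<Sum>p\<in>I. phi p lam (\<rho> (fst p) (snd p))) + lam * (n - eps)" for \<rho> lam
    unfolding Lag_eq phi_def I_def n_def ..
  have HE: "Hcon T L \<rho> = n - (\<Sum>p\<in>I. \<rho> (fst p) (snd p))" for \<rho>
    unfolding Hsum_eq I_def n_def ..
  have BoxE: "\<rho> \<in> Box T L \<longleftrightarrow> (\<forall>p\<in>I. \<rho> (fst p) (snd p) \<in> {0..1})" for \<rho>
    unfolding Box_iff I_def ..
  have LagS: "Lag T L r b eps \<rho> (lam + d) = Lag T L r b eps \<rho> lam + d * (Hcon T L \<rho> - eps)" for \<rho> lam d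
    unfolding Lag_def by (simp add: algebra_simps)
  have Ldiff: "Lag T L r b eps \<rho> lam - Lag T L r b eps \<rho>' lam
      = (\<Sum>p\<in>I. phi p lam (\<rho> (fst p) (snd p)) - phi p lam (\<rho>' (fst p) (snd p)))" for \<rho> \<rho>' lam
    unfolding LagE by (simp add: sum_subtractf)
  have conv: "\<forall>a\<in>{0..1}. \<forall>c\<in>{0..1}. \<forall>t\<in>{0<..<1}. a \<noteq> c \<longrightarrow>
      phi p lam ((1-t)*a+t*c) < (1-t)*phi p lam a + t*phi p lam c" if p: "p \<in> I" for p lam
  proof (intro ballI impI)
    fix a c t :: real assume a: "a \<in> {0..1}" and c: "c \<in> {0..1}" and t: "t \<in> {0<..<1}" and ac: "a \<noteq> c"
    have pt: "fst p \<in> {1..T}" "snd p \<in> {1..L}" using p unfolding I_def by auto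
    have "((1-t)*a+t*c) * real (r (fst p) (snd p)) * b (fst p) (snd p) ((1-t)*a+t*c)
        < (1-t)*(a*real (r (fst p) (snd p))*b (fst p) (snd p) a) + t*(c*real (r (fst p) (snd p))*b (fst p) (snd p) c)"
      using strict_conv_xb[of "real (r (fst p) (snd p))" "b (fst p) (snd p)" a c t] r_pos b_mono b_convex pt a c ac t
      by auto
    then show "phi p lam ((1-t)*a+t*c) < (1-t)*phi p lam a + t*phi p lam c"
      unfolding phi_def by (simp add: algebra_simps)
  qed
  have cmin: "\<forall>x\<in>{0..1}. phi p lamt (\<rho>t (fst p) (snd p)) \<le> phi p lamt x" if p: "p \<in> I" for p
  proof
    fix x :: real assume x: "x \<in> {0..1}"
    define \<rho>' where "\<rho>' t l = (if (t, l) = p then x else \<rho>t t l)" for t l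
    have "\<rho>' \<in> Box T L" unfolding BoxE using rho_t_box x unfolding BoxE \<rho>'_def by auto
    then have "Lag T L r b eps \<rho>t lamt \<le> Lag T L r b eps \<rho>' lamt" using rho_t_min by auto
    then have le: "0 \<le> (\<Sum>q\<in>I. phi q lamt (\<rho>' (fst q) (snd q)) - phi q lamt (\<rho>t (fst q) (snd q)))"
      using Ldiff[of \<rho>' lamt \<rho>t] by simp
    have "(\<Sum>q\<in>I. phi q lamt (\<rho>' (fst q) (snd q)) - phi q lamt (\<rho>t (fst q) (snd q)))
       = (\<Sum>q\<in>I. if q = p then phi p lamt x - phi p lamt (\<rho>t (fst p) (snd p)) else 0)"
      by (rule sum.cong) (auto simp: \<rho>'_def)
    also have "\<dots> = phi p lamt x - phi p lamt (\<rho>t (fst p) (snd p))"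
      using finI p by simp
    finally show "phi p lamt (\<rho>t (fst p) (snd p)) \<le> phi p lamt x" using le by simp
  qed
  have rtI: "\<forall>p\<in>I. \<rho>t (fst p) (snd p) \<in> {0..1}" using rho_t_box BoxE by auto
  have bnz: "Box T L \<noteq> {}" using rho_t_box by auto
  have d_le: "dualfun T L r b eps lamt \<le> Lag T L r b eps \<rho>t lamt"
    unfolding dualfun_def
    by (rule cINF_lower[OF _ rho_t_box]) (use rho_t_min in \<open>auto intro!: bdd_belowI2\<close>)
  have d_ge: "dualfun T L r b eps lam \<ge> m" if "\<forall>\<rho>\<in>Box T L. m \<le> Lag T L r b eps \<rho> lam" for lam m
    unfolding dualfun_def using that bnz by (intro cINF_greatest) auto
  have Hle: "Hcon T L \<rho>t \<le> eps"
  proof (rule ccontr)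
    assume nH: "\<not> Hcon T L \<rho>t \<le> eps"
    define gap where "gap = Hcon T L \<rho>t - eps"
    have gap: "gap > 0" using nH unfolding gap_def by simp
    define h where "h = gap / (2*n)"
    have h: "h > 0" unfolding h_def using gap npos by simp
    have "\<forall>p\<in>I. \<exists>D>0. \<forall>d. 0 < d \<and> d \<le> D \<longrightarrow> (\<forall>x\<in>{0..1}.
        phi p lamt x - phi p lamt (\<rho>t (fst p) (snd p)) \<ge> d*(x-\<rho>t (fst p) (snd p)) - d*h)"
      using one_dim[OF conv _ cmin h] rtI by blast
    then obtain Df where Df: "\<forall>p\<in>I. Df p > 0 \<and> (\<forall>d. 0 < d \<and> d \<le> Df p \<longrightarrow> (\<forall>x\<in>{0..1}.
        phi p lamt x - phi p lamt (\<rho>t (fst p) (snd p)) \<ge> d*(x-\<rho>t (fst p) (snd p)) - d*h))"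
      by metis
    define \<delta> where "\<delta> = Min (Df ` I)"
    have \<delta>pos: "\<delta> > 0" unfolding \<delta>_def using finI Inz Df by (subst Min_gr_iff) auto
    have \<delta>le: "\<delta> \<le> Df p" if "p \<in> I" for p unfolding \<delta>_def using finI that by simp
    have "\<forall>\<rho>\<in>Box T L. Lag T L r b eps \<rho>t lamt + \<delta> * gap / 2 \<le> Lag T L r b eps \<rho> (lamt + \<delta>)"
    proof
      fix \<rho> assume \<rho>: "\<rho> \<in> Box T L"
      have \<rho>I: "\<forall>p\<in>I. \<rho> (fst p) (snd p) \<in> {0..1}" using \<rho> BoxE by auto
      have "(\<Sum>p\<in>I. \<delta>*(\<rho> (fst p) (snd p) - \<rho>t (fst p) (snd p)) - \<delta>*h)
          \<le> (\<Sum>p\<in>I. phi p lamt (\<rho> (fst p) (snd p)) - phi p lamt (\<rho>t (fst p) (snd p)))"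
        using Df \<delta>le \<delta>pos \<rho>I by (intro sum_mono) auto
      also have "\<dots> = Lag T L r b eps \<rho> lamt - Lag T L r b eps \<rho>t lamt" using Ldiff by simp
      finally have A: "\<delta>*((\<Sum>p\<in>I. \<rho> (fst p) (snd p)) - (\<Sum>p\<in>I. \<rho>t (fst p) (snd p))) - \<delta>*h*n
          \<le> Lag T L r b eps \<rho> lamt - Lag T L r b eps \<rho>t lamt"
        by (simp only: sum_subtractf sum_distrib_left[symmetric] sum_constant n_def) (simp add: algebra_simps)
      have hn: "h * n = gap / 2" unfolding h_def using npos by simp
      have e1: "Lag T L r b eps \<rho> (lamt + \<delta>) = Lag T L r b eps \<rho> lamt + \<delta> * (Hcon T L \<rho> - eps)" by (rule LagS)
      have e2: "\<delta>*h*n = \<delta>*gap/2" using hn by (simp add: algebra_simps)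
      have e3: "\<delta>*gap = \<delta>*n - \<delta>*(\<Sum>p\<in>I. \<rho>t (fst p) (snd p)) - \<delta>*eps" by (simp add: gap_def HE algebra_simps)
      have e4: "\<delta> * (Hcon T L \<rho> - eps) = \<delta>*n - \<delta>*(\<Sum>p\<in>I. \<rho> (fst p) (snd p)) - \<delta>*eps" by (simp add: HE algebra_simps)
      have e5: "\<delta>*((\<Sum>p\<in>I. \<rho> (fst p) (snd p)) - (\<Sum>p\<in>I. \<rho>t (fst p) (snd p))) = \<delta>*(\<Sum>p\<in>I. \<rho> (fst p) (snd p)) - \<delta>*(\<Sum>p\<in>I. \<rho>t (fst p) (snd p))" by (simp add: algebra_simps)
      show "Lag T L r b eps \<rho>t lamt + \<delta> * gap / 2 \<le> Lag T L r b eps \<rho> (lamt + \<delta>)"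
        using A e1 e2 e3 e4 e5 by linarith
    qed
    then have "dualfun T L r b eps (lamt + \<delta>) \<ge> Lag T L r b eps \<rho>t lamt + \<delta> * gap / 2" by (rule d_ge)
    moreover have "dualfun T L r b eps (lamt + \<delta>) \<le> dualfun T L r b eps lamt"
      using lam_max lam_nonneg \<delta>pos by simp
    moreover have "\<delta> * gap / 2 > 0" using \<delta>pos gap by simp
    ultimately show False using d_le by linarith
  qed
  have Hcs: "lamt * (Hcon T L \<rho>t - eps) = 0"
  proof (rule ccontr)
    assume ne: "lamt * (Hcon T L \<rho>t - eps) \<noteq> 0"
    then have lpos: "lamt > 0" using lam_nonneg by (cases "lamt = 0") auto
    define gap where "gap = eps - Hcon T L \<rho>t"
    have gap: "gap > 0" using ne Hle unfolding gap_def by auto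
    define h where "h = gap / (2*n)"
    have h: "h > 0" unfolding h_def using gap npos by simp
    have "\<forall>p\<in>I. \<exists>D>0. \<forall>d. 0 < d \<and> d \<le> D \<longrightarrow> (\<forall>x\<in>{0..1}.
        phi p lamt x - phi p lamt (\<rho>t (fst p) (snd p)) \<ge> d*(\<rho>t (fst p) (snd p) - x) - d*h)"
      using one_dim'[OF conv _ cmin h] rtI by blast
    then obtain Df where Df: "\<forall>p\<in>I. Df p > 0 \<and> (\<forall>d. 0 < d \<and> d \<le> Df p \<longrightarrow> (\<forall>x\<in>{0..1}.
        phi p lamt x - phi p lamt (\<rho>t (fst p) (snd p)) \<ge> d*(\<rho>t (fst p) (snd p) - x) - d*h))"
      by metis
    define \<delta> where "\<delta> = min lamt (Min (Df ` I))"
    have "Min (Df ` I) > 0" using finI Inz Df by (subst Min_gr_iff) auto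
    then have \<delta>pos: "\<delta> > 0" unfolding \<delta>_def using lpos by simp
    have \<delta>le: "\<delta> \<le> Df p" if "p \<in> I" for p unfolding \<delta>_def using finI that
      by (meson Min_le finite_imageI image_eqI min.coboundedI2)
    have \<delta>l: "\<delta> \<le> lamt" unfolding \<delta>_def by simp
    have "\<forall>\<rho>\<in>Box T L. Lag T L r b eps \<rho>t lamt + \<delta> * gap / 2 \<le> Lag T L r b eps \<rho> (lamt - \<delta>)"
    proof
      fix \<rho> assume \<rho>: "\<rho> \<in> Box T L"
      have \<rho>I: "\<forall>p\<in>I. \<rho> (fst p) (snd p) \<in> {0..1}" using \<rho> BoxE by auto
      have "(\<Sum>p\<in>I. \<delta>*(\<rho>t (fst p) (snd p) - \<rho> (fst p) (snd p)) - \<delta>*h)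
          \<le> (\<Sum>p\<in>I. phi p lamt (\<rho> (fst p) (snd p)) - phi p lamt (\<rho>t (fst p) (snd p)))"
        using Df \<delta>le \<delta>pos \<rho>I by (intro sum_mono) auto
      also have "\<dots> = Lag T L r b eps \<rho> lamt - Lag T L r b eps \<rho>t lamt" using Ldiff by simp
      finally have A: "\<delta>*((\<Sum>p\<in>I. \<rho>t (fst p) (snd p)) - (\<Sum>p\<in>I. \<rho> (fst p) (snd p))) - \<delta>*h*n
          \<le> Lag T L r b eps \<rho> lamt - Lag T L r b eps \<rho>t lamt"
        by (simp only: sum_subtractf sum_distrib_left[symmetric] sum_constant n_def) (simp add: algebra_simps)
      have hn: "h * n = gap / 2" unfolding h_def using npos by simp
      have "Lag T L r b eps \<rho> (lamt + (-\<delta>)) = Lag T L r b eps \<rho> lamt + (-\<delta>) * (Hcon T L \<rho> - eps)" by (rule LagS)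
      then have e1: "Lag T L r b eps \<rho> (lamt - \<delta>) = Lag T L r b eps \<rho> lamt - \<delta> * (Hcon T L \<rho> - eps)" by simp
      have e2: "\<delta>*h*n = \<delta>*gap/2" using hn by (simp add: algebra_simps)
      have e3: "\<delta>*gap = \<delta>*eps - \<delta>*n + \<delta>*(\<Sum>p\<in>I. \<rho>t (fst p) (snd p))" by (simp add: gap_def HE algebra_simps)
      have e4: "\<delta> * (Hcon T L \<rho> - eps) = \<delta>*n - \<delta>*(\<Sum>p\<in>I. \<rho> (fst p) (snd p)) - \<delta>*eps" by (simp add: HE algebra_simps)
      have e5: "\<delta>*((\<Sum>p\<in>I. \<rho>t (fst p) (snd p)) - (\<Sum>p\<in>I. \<rho> (fst p) (snd p))) = \<delta>*(\<Sum>p\<in>I. \<rho>t (fst p) (snd p)) - \<delta>*(\<Sum>p\<in>I. \<rho> (fst p) (snd p))" by (simp add: algebra_simps)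
      show "Lag T L r b eps \<rho>t lamt + \<delta> * gap / 2 \<le> Lag T L r b eps \<rho> (lamt - \<delta>)"
        using A e1 e2 e3 e4 e5 by linarith
    qed
    then have "dualfun T L r b eps (lamt - \<delta>) \<ge> Lag T L r b eps \<rho>t lamt + \<delta> * gap / 2" by (rule d_ge)
    moreover have "dualfun T L r b eps (lamt - \<delta>) \<le> dualfun T L r b eps lamt"
      using lam_max \<delta>l by simp
    moreover have "\<delta> * gap / 2 > 0" using \<delta>pos gap by simp
    ultimately show False using d_le by linarith
  qed
  have bon: "1 - (\<Prod>p\<in>I. \<rho> (fst p) (snd p)) \<le> (\<Sum>p\<in>I. 1 - \<rho> (fst p) (snd p)) \<and>
      (\<Sum>p\<in>I. 1 - \<rho> (fst p) (snd p)) \<le> (1 - (\<Prod>p\<in>I. \<rho> (fst p) (snd p))) + n*(n-1)/2*M\<^sup>2"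
    if "\<rho> \<in> Box T L" "\<forall>p\<in>I. 1 - \<rho> (fst p) (snd p) \<le> M" for \<rho> M
    using bonf[OF finI, of "\<lambda>p. 1 - \<rho> (fst p) (snd p)" M] that BoxE unfolding n_def by auto
  have HI: "Hcon T L \<rho> = (\<Sum>p\<in>I. 1 - \<rho> (fst p) (snd p))" for \<rho>
    unfolding HE n_def by (simp add: sum_subtractf)
  have GI: "Gcon T L \<rho> = 1 - (\<Prod>p\<in>I. \<rho> (fst p) (snd p))" for \<rho>
    unfolding G_eq I_def ..
  have "Gcon T L \<rho>t \<le> Hcon T L \<rho>t" using bon[OF rho_t_box, of 1] rtI unfolding GI HI by auto
  then have low: "Fobj T L r b \<rho>star \<le> Fobj T L r b \<rho>t" using PA1_opt rho_t_box Hle by auto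
  have qs: "\<forall>p\<in>I. 1 - \<rho>star (fst p) (snd p) \<le> eps"
  proof
    fix p assume p: "p \<in> I"
    have sI: "\<forall>q\<in>I. \<rho>star (fst q) (snd q) \<in> {0..1}" using PA1_feas(1) BoxE by auto
    have "(\<Prod>q\<in>I. \<rho>star (fst q) (snd q)) = \<rho>star (fst p) (snd p) * (\<Prod>q\<in>I-{p}. \<rho>star (fst q) (snd q))"
      using finI p by (simp add: prod.remove)
    also have "\<dots> \<le> \<rho>star (fst p) (snd p)"
      using sI p by (intro mult_left_le prod_le_1) auto
    finally show "1 - \<rho>star (fst p) (snd p) \<le> eps" using PA1_feas(2) unfolding GI by simp
  qed
  have Hs: "Hcon T L \<rho>star \<le> eps + n*(n-1)/2*eps\<^sup>2"
    using bon[OF PA1_feas(1) qs] PA1_feas(2) unfolding GI HI by linarith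
  have "Lag T L r b eps \<rho>t lamt \<le> Lag T L r b eps \<rho>star lamt" using rho_t_min PA1_feas(1) by auto
  then have "Fobj T L r b \<rho>t \<le> Fobj T L r b \<rho>star + lamt * (Hcon T L \<rho>star - eps)"
    using Hcs unfolding Lag_def by simp
  also have "lamt * (Hcon T L \<rho>star - eps) \<le> lamt * (n*(n-1)/2*eps\<^sup>2)"
    using Hs lam_nonneg by (intro mult_left_mono) auto
  finally have up: "Fobj T L r b \<rho>t - Fobj T L r b \<rho>star \<le> lamt * (n*(n-1)/2*eps\<^sup>2)" by simp
  have nn: "n = real (T * L)" unfolding n_def cardI ..
  show ?thesis using low up unfolding nn by (simp add: algebra_simps)
qed

end
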